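(* Let $L$ be a normal incline, $n\ge 3$, and let $A$ be an $n\times n$ completely positive matrix over $L$ such that every left almost principal $2\times 2$ submatrix of $A$ has positive determinant greater than or equal to its negative determinant. Then $A$ is UL-completely positive.
   Context: An incline is a nonempty set $L$ with binary operations $\oplus,\otimes$ such that $(L,\oplus)$ is a semilattice ($\oplus$ associative, commutative, idempotent), $(L,\otimes)$ is a semigroup, $x\otimes(y\oplus z)=(x\otimes y)\oplus(x\otimes z)$ and $x\oplus(x\otimes y)=x$ for all $x,y,z$. The order is $x\le y\iff x\oplus y=y$; $L$ is commutative if $\otimes$ is commutative. An r-ideal is a nonempty $J\subseteq L$ closed under $\oplus$ and under multiplication by arbitrary elements of $L$; a lattice ideal is a nonempty $J\subseteq L$ closed under $\oplus$ and downward closed. A commutative incline $L$ is normal if it has an additive identity $\mathbf{0}$ and a multiplicative identity $\mathbf{1}$ and: every singly generated r-ideal is a lattice ideal (LI-property); for each $x$ there is a unique $c$ with $c\otimes c=x$; $x\otimes y\le(x\otimes x)\oplus(y\otimes y)$ for all $x,y$. Matrix product: $(BC)_{ij}=\bigoplus_k b_{ik}\otimes c_{kj}$; $B^T$ is the transpose. $A$ is completely positive if $A=BB^T$ for some $n\times k$ matrix $B$ over $L$ all of whose entries are of the form $c\otimes c$. $A$ is UL-completely positive if $A=UU^T$ for some upper triangular $n\times n$ matrix $U$ over $L$. For index sets $\alpha=\{\alpha_1<\dots<\alpha_k\}$, $\beta=\{\beta_1<\dots<\beta_k\}$, $A[\alpha|\beta]$ is the submatrix with $(i,j)$ entry $a_{\alpha_i\beta_j}$;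 it is left almost principal if $\alpha_j=\beta_j$ for $2\le j\le k$ but $\alpha_1\ne\beta_1$. For a $2\times 2$ matrix $\begin{bmatrix}p&q\\ r&s\end{bmatrix}$, the positive determinant is $p\otimes s$ and the negative determinant is $q\otimes r$. *)

theory Defs
  imports Main
begin

definition incline :: "('a \<Rightarrow> 'a \<Rightarrow> 'a) \<Rightarrow> ('a \<Rightarrow> 'a \<Rightarrow> 'a) \<Rightarrow> bool" where
  "incline p m \<longleftrightarrow>
     (\<forall>x y z. p (p x y) z = p x (p y z)) \<and> (\<forall>x y. p x y = p y x) \<and> (\<forall>x. p x x = x) \<and>
     (\<forall>x y z. m (m x y) z = m x (m y z)) \<and>
     (\<forall>x y z. m x (p y z) = p (m x y) (m x z)) \<and>
     (\<forall>x y. p x (m x y) = x)"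

definition ileq :: "('a \<Rightarrow> 'a \<Rightarrow> 'a) \<Rightarrow> 'a \<Rightarrow> 'a \<Rightarrow> bool" where
  "ileq p x y \<longleftrightarrow> p x y = y"

definition r_ideal :: "('a \<Rightarrow> 'a \<Rightarrow> 'a) \<Rightarrow> ('a \<Rightarrow> 'a \<Rightarrow> 'a) \<Rightarrow> 'a set \<Rightarrow> bool" where
  "r_ideal p m J \<longleftrightarrow> J \<noteq> {} \<and> (\<forall>x\<in>J. \<forall>y\<in>J. p x y \<in> J) \<and>
     (\<forall>x\<in>J. \<forall>y. m x y \<in> J \<and> m y x \<in> J)"

definition lattice_ideal :: "('a \<Rightarrow> 'a \<Rightarrow> 'a) \<Rightarrow> 'a set \<Rightarrow> bool" where
  "lattice_ideal p J \<longleftrightarrow> J \<noteq> {} \<and> (\<forall>x\<in>J. \<forall>y\<in>J. p x y \<in> J) \<and>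
     (\<forall>x\<in>J. \<forall>y. ileq p y x \<longrightarrow> y \<in> J)"

definition gen_r_ideal :: "('a \<Rightarrow> 'a \<Rightarrow> 'a) \<Rightarrow> ('a \<Rightarrow> 'a \<Rightarrow> 'a) \<Rightarrow> 'a \<Rightarrow> 'a set" where
  "gen_r_ideal p m x = \<Inter>{J. r_ideal p m J \<and> x \<in> J}"

definition normal_incline ::
  "('a \<Rightarrow> 'a \<Rightarrow> 'a) \<Rightarrow> ('a \<Rightarrow> 'a \<Rightarrow> 'a) \<Rightarrow> 'a \<Rightarrow> 'a \<Rightarrow> bool" where
  "normal_incline p m z e \<longleftrightarrow>
     incline p m \<and> (\<forall>x y. m x y = m y x) \<and>
     (\<forall>x. p z x = x) \<and> (\<forall>x. m e x = x \<and> m x e = x) \<and>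
     (\<forall>x. lattice_ideal p (gen_r_ideal p m x)) \<and>
     (\<forall>x. \<exists>!c. m c c = x) \<and>
     (\<forall>x y. ileq p (m x y) (p (m x x) (m y y)))"

definition isum :: "('a \<Rightarrow> 'a \<Rightarrow> 'a) \<Rightarrow> 'a \<Rightarrow> nat \<Rightarrow> (nat \<Rightarrow> 'a) \<Rightarrow> 'a" where
  "isum p z k f = foldr (\<lambda>i acc. p (f i) acc) [0..<k] z"

text \<open>Matrices are functions nat => nat => 'a, indices 0-based and only meaningful below the size.\<close>

definition completely_positive ::
  "('a \<Rightarrow> 'a \<Rightarrow> 'a) \<Rightarrow> ('a \<Rightarrow> 'a \<Rightarrow> 'a) \<Rightarrow> 'a \<Rightarrow> nat \<Rightarrow> (nat \<Rightarrow> nat \<Rightarrow> 'a) \<Rightarrow> bool" where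
  "completely_positive p m z n A \<longleftrightarrow>
     (\<exists>k (B :: nat \<Rightarrow> nat \<Rightarrow> 'a). k \<ge> 1 \<and>
        (\<forall>i<n. \<forall>l<k. \<exists>c. B i l = m c c) \<and>
        (\<forall>i<n. \<forall>j<n. A i j = isum p z k (\<lambda>l. m (B i l) (B j l))))"

definition UL_completely_positive ::
  "('a \<Rightarrow> 'a \<Rightarrow> 'a) \<Rightarrow> ('a \<Rightarrow> 'a \<Rightarrow> 'a) \<Rightarrow> 'a \<Rightarrow> nat \<Rightarrow> (nat \<Rightarrow> nat \<Rightarrow> 'a) \<Rightarrow> bool" where
  "UL_completely_positive p m z n A \<longleftrightarrow>
     (\<exists>U :: nat \<Rightarrow> nat \<Rightarrow> 'a.
        (\<forall>i<n. \<forall>j<n. j < i \<longrightarrow> U i j = z) \<and>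
        (\<forall>i<n. \<forall>j<n. A i j = isum p z n (\<lambda>l. m (U i l) (U j l))))"

text \<open>Every left almost principal 2x2 submatrix A[{a1<c}|{b1<c}], a1 \<noteq> b1, has
  positive determinant A(a1,b1) A(c,c) >= negative determinant A(a1,c) A(c,b1).\<close>
definition lap2_condition ::
  "('a \<Rightarrow> 'a \<Rightarrow> 'a) \<Rightarrow> ('a \<Rightarrow> 'a \<Rightarrow> 'a) \<Rightarrow> nat \<Rightarrow> (nat \<Rightarrow> nat \<Rightarrow> 'a) \<Rightarrow> bool" where
  "lap2_condition p m n A \<longleftrightarrow>
     (\<forall>a1 b1 c. a1 < c \<and> b1 < c \<and> c < n \<and> a1 \<noteq> b1 \<longrightarrow>
        ileq p (m (A a1 c) (A c b1)) (m (A a1 b1) (A c c)))"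

end

theory Submission
  imports Defs
begin

locale ninc =
  fixes p m :: "'a \<Rightarrow> 'a \<Rightarrow> 'a" and z e :: 'a
  assumes N: "normal_incline p m z e"
begin

lemma incl: "incline p m" using N unfolding normal_incline_def by blast
lemma p_assoc: "p (p x y) w = p x (p y w)" using incl unfolding incline_def by blast
lemma p_comm: "p x y = p y x" using incl unfolding incline_def by blast
lemma p_idem: "p x x = x" using incl unfolding incline_def by blast
lemma m_assoc: "m (m x y) w = m x (m y w)" using incl unfolding incline_def by blast
lemma m_comm: "m x y = m y x" using N unfolding normal_incline_def by blast
lemma distl: "m x (p y w) = p (m x y) (m x w)" using incl unfolding incline_def by blast
lemma distr: "m (p y w) x = p (m y x) (m w x)" using distl m_comm by metis
lemma absorb: "p x (m x y) = x" using incl unfolding incline_def by blast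
lemma z_l: "p z x = x" using N unfolding normal_incline_def by blast
lemma e_l: "m e x = x" using N unfolding normal_incline_def by blast
lemma LIax: "lattice_ideal p (gen_r_ideal p m x)" using N unfolding normal_incline_def by blast
lemma sq_ex1: "\<exists>!c. m c c = x" using N unfolding normal_incline_def by blast
lemma cs_ax: "ileq p (m x y) (p (m x x) (m y y))" using N unfolding normal_incline_def by blast

sublocale mul: abel_semigroup m by unfold_locales (rule m_assoc, rule m_comm)

lemma le_refl: "ileq p x x" by (simp add: ileq_def p_idem)
lemma le_trans: "ileq p x y \<Longrightarrow> ileq p y w \<Longrightarrow> ileq p x w"
  unfolding ileq_def by (metis p_assoc)
lemma le_antisym: "ileq p x y \<Longrightarrow> ileq p y x \<Longrightarrow> x = y"
  unfolding ileq_def by (metis p_comm)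
lemma le_j1: "ileq p x (p x y)" unfolding ileq_def by (metis p_assoc p_idem)
lemma le_j2: "ileq p y (p x y)" using le_j1 p_comm by metis
lemma join_le: "ileq p x w \<Longrightarrow> ileq p y w \<Longrightarrow> ileq p (p x y) w"
  unfolding ileq_def by (metis p_assoc)
lemma mono_r: "ileq p x y \<Longrightarrow> ileq p (m w x) (m w y)"
  unfolding ileq_def by (metis distl)
lemma mono_l: "ileq p x y \<Longrightarrow> ileq p (m x w) (m y w)"
  using mono_r m_comm by metis
lemma mono2: "ileq p a a' \<Longrightarrow> ileq p b b' \<Longrightarrow> ileq p (m a b) (m a' b')"
  using mono_l mono_r le_trans by metis
lemma mle1: "ileq p (m x y) x" unfolding ileq_def by (metis absorb p_comm)
lemma mle2: "ileq p (m x y) y" using mle1 m_comm by metis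
lemma z_le: "ileq p z x" by (simp add: ileq_def z_l)
lemma m_z: "m x z = z" using mle2 z_le le_antisym by metis

lemma LI:
  assumes "ileq p y x"
  shows "\<exists>t. y = m x t"
proof -
  let ?I = "{w. \<exists>t. w = m x t}"
  have c1: "\<forall>a\<in>?I. \<forall>b\<in>?I. p a b \<in> ?I"
  proof (intro ballI)
    fix a b assume "a \<in> ?I" "b \<in> ?I"
    then obtain t t' where "a = m x t" "b = m x t'" by blast
    then have "p a b = m x (p t t')" by (simp add: distl)
    then show "p a b \<in> ?I" by blast
  qed
  have c2: "\<forall>a\<in>?I. \<forall>y. m a y \<in> ?I \<and> m y a \<in> ?I"
  proof (intro ballI allI)
    fix a y assume "a \<in> ?I"
    then obtain t where t: "a = m x t" by blast
    have "m a y = m x (m t y)" using t mul.assoc by simp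
    moreover have "m y a = m x (m y t)" using t mul.left_commute by simp
    ultimately show "m a y \<in> ?I \<and> m y a \<in> ?I" by blast
  qed
  have rI: "r_ideal p m ?I" unfolding r_ideal_def
  proof (intro conjI)
    show "?I \<noteq> {}" by blast
  qed (fact c1, fact c2)
  have xin: "x \<in> ?I"
  proof -
    have "x = m x e" using e_l m_comm by metis
    then show ?thesis by blast
  qed
  have sub: "gen_r_ideal p m x \<subseteq> ?I" unfolding gen_r_ideal_def
    by (rule Inter_lower, rule CollectI, rule conjI[OF rI xin])
  have xg: "x \<in> gen_r_ideal p m x" unfolding gen_r_ideal_def by blast
  have "\<forall>w\<in>gen_r_ideal p m x. \<forall>v. ileq p v w \<longrightarrow> v \<in> gen_r_ideal p m x"
    using LIax[of x] unfolding lattice_ideal_def by blast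
  then have "y \<in> gen_r_ideal p m x" using xg assms by blast
  thus ?thesis using sub by blast
qed

definition sr where "sr x = (THE c. m c c = x)"

lemma sr_sq: "m (sr x) (sr x) = x" using theI'[OF sq_ex1] unfolding sr_def .
lemma sq_inj: "m a a = m b b \<Longrightarrow> a = b" using sq_ex1[of "m b b"] by blast
lemma sr_eq: "sr (m c c) = c" using sq_inj sr_sq by metis

lemma sq_add: "m (p x y) (p x y) = p (m x x) (m y y)"
proof -
  have "m (p x y) (p x y) = p (p (m x x) (m y x)) (p (m x y) (m y y))"
    by (simp only: distl distr)
  also have "\<dots> = p (p (m x x) (m x y)) (p (m x y) (m y y))" by (simp only: m_comm[of y x])
  also have "\<dots> = p (m x y) (p (m x x) (m y y))"
    by (metis p_assoc p_comm p_idem)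
  also have "\<dots> = p (m x x) (m y y)" using cs_ax unfolding ileq_def .
  finally show ?thesis .
qed

lemma sq_mono: "ileq p a b \<Longrightarrow> ileq p (m a a) (m b b)" using mono2 by blast
lemma sq_rev: "ileq p (m a a) (m b b) \<Longrightarrow> ileq p a b"
  unfolding ileq_def using sq_add sq_inj by metis
lemma sr_mono: "ileq p x y \<Longrightarrow> ileq p (sr x) (sr y)"
  using sq_rev sr_sq by metis
lemma sr_mult: "sr (m x y) = m (sr x) (sr y)"
proof -
  have "m (m (sr x) (sr y)) (m (sr x) (sr y)) = m (m (sr x) (sr x)) (m (sr y) (sr y))"
    by (simp add: mul.assoc mul.commute mul.left_commute)
  thus ?thesis using sr_sq sr_eq by metis
qed

lemma K:
  assumes "ileq p b a" "m a a = m a b"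
  shows "a = b"
proof -
  obtain c where b: "b = m a c" using LI assms(1) by blast
  have "m a a = m a b" by (rule assms(2))
  also have "\<dots> = m (m a a) c" using b by (simp add: mul.assoc)
  finally have "m a a = m (m a a) c" .
  hence "sr (m a a) = sr (m (m a a) c)" by simp
  hence a: "a = m a (sr c)" by (simp only: sr_mult[of "m a a" c] sr_eq)
  have "b = m (m a (sr c)) (sr c)" using b sr_sq[of c] by (simp add: mul.assoc)
  also have "\<dots> = a" using a by simp
  finally show ?thesis by simp
qed

lemma K2:
  assumes "ileq p u (m (sr Y) (sr u))"
  shows "ileq p u Y"
proof -
  define W where "W = p u Y"
  have 1: "ileq p (sr u) (sr W)" unfolding W_def by (rule sr_mono, rule le_j1)
  have 2: "ileq p (sr Y) (sr W)" unfolding W_def by (rule sr_mono, rule le_j2)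
  have "ileq p u (m (sr Y) (sr W))" using assms mono_r[OF 1] le_trans by blast
  moreover have "ileq p Y (m (sr Y) (sr W))" using mono_r[OF 2, of "sr Y"] sr_sq by metis
  ultimately have 3: "ileq p W (m (sr Y) (sr W))" unfolding W_def by (rule join_le)
  have 4: "ileq p (m (sr Y) (sr W)) W" using mono_l[OF 2, of "sr W"] sr_sq by metis
  have "W = m (sr Y) (sr W)" using 3 4 le_antisym by blast
  hence "m (sr W) (sr W) = m (sr W) (sr Y)" using sr_sq m_comm by metis
  hence "sr W = sr Y" using K 2 by blast
  hence "W = Y" using sr_sq by metis
  thus ?thesis unfolding W_def using le_j1 by metis
qed

lemma BL:
  assumes "ileq p u D" "ileq p (m u D) (m Y D)"
  shows "ileq p u Y"
proof -
  obtain s where u: "u = m D s" using LI assms(1) by blast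
  have "ileq p (sr (m u D)) (sr (m Y D))" using sr_mono assms(2) by blast
  moreover have "sr (m u D) = m D (sr s)"
  proof -
    have "m u D = m (m D D) s" using u by (simp add: mul.assoc mul.commute mul.left_commute)
    thus ?thesis by (simp add: sr_mult sr_sq)
  qed
  ultimately have "ileq p (m D (sr s)) (m (sr Y) (sr D))" by (simp add: sr_mult)
  hence "ileq p (m (m D (sr s)) (sr s)) (m (m (sr Y) (sr D)) (sr s))" by (rule mono_l)
  moreover have "m (m D (sr s)) (sr s) = u" using u sr_sq[of s] by (simp add: mul.assoc)
  moreover have "m (m (sr Y) (sr D)) (sr s) = m (sr Y) (sr u)" using u by (simp add: sr_mult mul.assoc)
  ultimately show ?thesis using K2 by simp
qed

lemma L2:
  assumes "ileq p (m x D) (m Y D)"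
  shows "\<exists>F. m F D = D \<and> ileq p (m x F) Y"
proof -
  define W where "W = p x Y"
  have WD: "m W D = m Y D" using assms unfolding W_def ileq_def by (simp add: distr)
  obtain r where r: "Y = m W r" using LI le_j2[of Y x] unfolding W_def by blast
  obtain \<rho> where rho: "D = m (p W D) \<rho>" using LI le_j2[of D W] by blast
  have D2: "D = p (m W \<rho>) (m D \<rho>)" using rho distr by metis
  have a: "ileq p (m W \<rho>) D" using D2 le_j1 by metis
  have b: "ileq p (m W \<rho>) Y"
  proof (rule BL[OF a])
    have "m (m W \<rho>) D = m (m W D) \<rho>" by (simp add: mul.assoc mul.commute mul.left_commute)
    also have "\<dots> = m (m Y D) \<rho>" using WD by simp
    finally show "ileq p (m (m W \<rho>) D) (m Y D)" using mle1 by metis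
  qed
  have c: "ileq p (m W \<rho>) (p (m r D) (m \<rho> D))"
  proof (rule BL[OF a])
    have "m (m W \<rho>) D = m (m W D) \<rho>" by (simp add: mul.assoc mul.commute mul.left_commute)
    also have "\<dots> = m (m Y D) \<rho>" using WD by simp
    also have "\<dots> = m r (m (m W \<rho>) D)" using r by (simp add: mul.assoc mul.commute mul.left_commute)
    finally have e1: "m (m W \<rho>) D = m r (m (m W \<rho>) D)" .
    have "ileq p (m r (m (m W \<rho>) D)) (m r (m D D))" using mono_r mono_l a by blast
    moreover have "m r (m D D) = m (m r D) D" by (simp add: mul.assoc mul.commute mul.left_commute)
    moreover have "ileq p (m (m r D) D) (m (p (m r D) (m \<rho> D)) D)" using mono_l le_j1 by blast
    ultimately show "ileq p (m (m W \<rho>) D) (m (p (m r D) (m \<rho> D)) D)"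
      using e1 le_trans by metis
  qed
  define F where "F = p r \<rho>"
  have FD: "m F D = p (m r D) (m \<rho> D)" unfolding F_def by (simp add: distr)
  have "ileq p (m F D) D" using mle2 by blast
  moreover have "ileq p D (m F D)"
  proof -
    have "ileq p (m D \<rho>) (m F D)" unfolding FD using le_j2 m_comm by metis
    thus ?thesis using D2 c join_le FD by metis
  qed
  ultimately have 1: "m F D = D" using le_antisym by blast
  have "m W F = p Y (m W \<rho>)" unfolding F_def using r by (simp add: distl)
  also have "\<dots> = Y" using b p_comm unfolding ileq_def by metis
  finally have "m W F = Y" .
  moreover have "ileq p (m x F) (m W F)" unfolding W_def using mono_l le_j1 by blast
  ultimately show ?thesis using 1 by auto
qed

lemma L3:
  assumes "ileq p (m x (m d d)) (m Y (m d d))"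
  shows "\<exists>G. m G d = d \<and> ileq p (m x (m G G)) Y"
proof -
  obtain F where F: "m F (m d d) = m d d" "ileq p (m x F) Y" using L2 assms by blast
  define G where "G = sr F"
  have GG: "m G G = F" unfolding G_def by (rule sr_sq)
  have "m (m G d) (m G d) = m (m G G) (m d d)" by (simp add: mul.assoc mul.commute mul.left_commute)
  also have "\<dots> = m d d" using F(1) GG by simp
  finally have "m (m G d) (m G d) = m d d" .
  hence "m G d = d" by (rule sq_inj)
  thus ?thesis using F(2) GG by auto
qed

lemma Lmulti:
  assumes "finite S"
  shows "(\<forall>q\<in>S. ileq p (m (X q) (m d d)) (m (Y q) (m d d))) \<Longrightarrow>
     \<exists>G. m G d = d \<and> (\<forall>q\<in>S. ileq p (m (X q) (m G G)) (Y q))"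
  using assms
proof (induction S rule: finite_induct)
  case empty
  then show ?case using e_l by auto
next
  case (insert q S)
  obtain G1 where G1: "m G1 d = d" "\<forall>q\<in>S. ileq p (m (X q) (m G1 G1)) (Y q)"
    using insert by auto
  obtain G2 where G2: "m G2 d = d" "ileq p (m (X q) (m G2 G2)) (Y q)"
    using L3 insert.prems by blast
  define G where "G = m G1 G2"
  have "m G d = d" unfolding G_def using G1(1) G2(1) by (simp add: mul.assoc)
  moreover have "\<forall>q'\<in>insert q S. ileq p (m (X q') (m G G)) (Y q')"
  proof
    fix q' assume q': "q' \<in> insert q S"
    have s1: "ileq p (m G G) (m G1 G1)" unfolding G_def using sq_mono mle1 by blast
    have s2: "ileq p (m G G) (m G2 G2)" unfolding G_def using sq_mono mle2 by blast
    show "ileq p (m (X q') (m G G)) (Y q')"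
    proof (cases "q' = q")
      case True
      then show ?thesis using G2(2) mono_r[OF s2] le_trans by metis
    next
      case False
      then have "q' \<in> S" using q' by auto
      then show ?thesis using G1(2) mono_r[OF s1] le_trans by metis
    qed
  qed
  ultimately show ?case by blast
qed

lemma foldr_le: "(\<forall>i\<in>set xs. ileq p (f i) X) \<Longrightarrow> ileq p (foldr (\<lambda>i acc. p (f i) acc) xs z) X"
  by (induction xs) (auto simp: z_le join_le)

lemma foldr_ge: "i \<in> set xs \<Longrightarrow> ileq p (f i) (foldr (\<lambda>i acc. p (f i) acc) xs z)"
proof (induction xs)
  case Nil then show ?case by simp
next
  case (Cons a xs)
  then show ?case using le_j1 le_j2 le_trans by (cases "i = a") auto
qed

lemma isum_le: "(\<forall>l<k. ileq p (f l) X) \<Longrightarrow> ileq p (isum p z k f) X"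
  unfolding isum_def by (rule foldr_le) auto

lemma isum_ge: "l < k \<Longrightarrow> ileq p (f l) (isum p z k f)"
  unfolding isum_def by (rule foldr_ge) auto

lemma isum_eq: "l0 < k \<Longrightarrow> f l0 = X \<Longrightarrow> \<forall>l<k. ileq p (f l) X \<Longrightarrow> isum p z k f = X"
  using isum_le isum_ge le_antisym by metis

lemma main:
  assumes cp: "completely_positive p m z n A" and lap: "lap2_condition p m n A"
  shows "UL_completely_positive p m z n A"
proof -
  from cp obtain k B where AB: "\<forall>i<n. \<forall>j<n. A i j = isum p z k (\<lambda>l. m (B i l) (B j l))"
    unfolding completely_positive_def by blast
  have Asym: "A i j = A j i" if "i < n" "j < n" for i j
  proof -
    have "(\<lambda>l. m (B i l) (B j l)) = (\<lambda>l. m (B j l) (B i l))" using m_comm by blast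
    thus ?thesis using AB that by simp
  qed
  define d where "d i = sr (A i i)" for i
  have dd: "m (d i) (d i) = A i i" for i by (simp add: d_def sr_sq)
  have Bd: "ileq p (B i q) (d i)" if "i < n" "q < k" for i q
  proof -
    have "ileq p (m (B i q) (B i q)) (A i i)"
      using AB that isum_ge[of q k "\<lambda>l. m (B i l) (B i l)"] by auto
    then show ?thesis using sq_rev dd by metis
  qed
  have CS: "ileq p (A i j) (m (d i) (d j))" if "i < n" "j < n" for i j
  proof -
    have "ileq p (isum p z k (\<lambda>l. m (B i l) (B j l))) (m (d i) (d j))"
      by (rule isum_le) (use Bd that mono2 in blast)
    thus ?thesis using AB that by simp
  qed
  have Ald: "ileq p (A i l) (d l)" if "i < n" "l < n" for i l
    using CS[OF that] mle2 le_trans by blast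
  define s where "s i l = (SOME t. m t (d l) = A i l)" for i l
  have s: "m (s i l) (d l) = A i l" if il: "i < n" "l < n" for i l
  proof -
    obtain t where "A i l = m (d l) t" using LI Ald[OF il] by blast
    then have "m t (d l) = A i l" using m_comm by metis
    then show ?thesis unfolding s_def by (rule someI)
  qed
  have pair: "ileq p (m (m (s i l) (s j l)) (m (d l) (d l))) (m (A i j) (m (d l) (d l)))"
    if "i < l" "j < l" "l < n" for i j l
  proof -
    have il: "i < n" and jl: "j < n" using that by auto
    have "m (m (s i l) (s j l)) (m (d l) (d l)) = m (m (s i l) (d l)) (m (s j l) (d l))"
      by (simp add: mul.assoc mul.commute mul.left_commute)
    also have "\<dots> = m (A i l) (A j l)" using s il jl that by simp
    finally have e1: "m (m (s i l) (s j l)) (m (d l) (d l)) = m (A i l) (A j l)" .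
    have "ileq p (m (A i l) (A j l)) (m (A i j) (A l l))"
    proof (cases "i = j")
      case True
      have "ileq p (m (A i l) (A i l)) (m (m (d i) (d l)) (m (d i) (d l)))"
        using sq_mono CS il that by blast
      moreover have "m (m (d i) (d l)) (m (d i) (d l)) = m (m (d i) (d i)) (m (d l) (d l))"
        by (simp add: mul.assoc mul.commute mul.left_commute)
      ultimately show ?thesis using True dd by simp
    next
      case False
      have "ileq p (m (A i l) (A l j)) (m (A i j) (A l l))"
        using lap that False unfolding lap2_condition_def by blast
      moreover have "A l j = A j l" using Asym jl that by simp
      ultimately show ?thesis by simp
    qed
    then show ?thesis using e1 dd by simp
  qed
  define G where "G l = (SOME g. m g (d l) = d l \<and> (\<forall>q\<in>{0..<l}\<times>{0..<l}.
      ileq p (m (m (s (fst q) l) (s (snd q) l)) (m g g)) (A (fst q) (snd q))))" for l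
  have G: "m (G l) (d l) = d l \<and> (\<forall>i<l. \<forall>j<l. ileq p (m (m (s i l) (s j l)) (m (G l) (G l))) (A i j))"
    if "l < n" for l
  proof -
    have "\<exists>g. m g (d l) = d l \<and> (\<forall>q\<in>{0..<l}\<times>{0..<l}.
      ileq p (m (m (s (fst q) l) (s (snd q) l)) (m g g)) (A (fst q) (snd q)))"
      by (rule Lmulti[of "{0..<l}\<times>{0..<l}" "\<lambda>q. m (s (fst q) l) (s (snd q) l)" "d l"
          "\<lambda>q. A (fst q) (snd q)"]) (auto intro: pair that)
    then have "m (G l) (d l) = d l \<and> (\<forall>q\<in>{0..<l}\<times>{0..<l}.
      ileq p (m (m (s (fst q) l) (s (snd q) l)) (m (G l) (G l))) (A (fst q) (snd q)))"
      unfolding G_def by (rule someI_ex)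
    then show ?thesis by auto
  qed
  define U where "U i l = (if l < i then z else if l = i then d l else m (s i l) (G l))" for i l
  have low: "A i j = isum p z n (\<lambda>l. m (U i l) (U j l))" if "i \<le> j" "j < n" for i j
  proof (rule HOL.sym, rule isum_eq[of j])
    show "j < n" by fact
    show "m (U i j) (U j j) = A i j"
    proof (cases "i = j")
      case True
      then show ?thesis using dd by (simp add: U_def)
    next
      case False
      then have "i < j" using that by simp
      then have "m (U i j) (U j j) = m (m (s i j) (G j)) (d j)" by (simp add: U_def)
      also have "\<dots> = m (s i j) (m (G j) (d j))" by (simp add: mul.assoc)
      also have "\<dots> = A i j" using G[OF that(2)] s \<open>i < j\<close> that by simp
      finally show ?thesis .
    qed
    show "\<forall>l<n. ileq p (m (U i l) (U j l)) (A i j)"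
    proof (intro allI impI)
      fix l assume ln: "l < n"
      consider "l < j" | "l = j" | "j < l" by arith
      then show "ileq p (m (U i l) (U j l)) (A i j)"
      proof cases
        case 1
        then have "U j l = z" by (simp add: U_def)
        then show ?thesis by (simp add: m_z z_le)
      next
        case 2
        then show ?thesis using \<open>m (U i j) (U j j) = A i j\<close> le_refl by simp
      next
        case 3
        then have "m (U i l) (U j l) = m (m (s i l) (G l)) (m (s j l) (G l))"
          using that by (simp add: U_def)
        also have "\<dots> = m (m (s i l) (s j l)) (m (G l) (G l))" by (simp add: mul.assoc mul.commute mul.left_commute)
        finally show ?thesis using G[OF ln] 3 that by simp
      qed
    qed
  qed
  show ?thesis unfolding UL_completely_positive_def
  proof (intro exI[of _ U] conjI allI impI)
    fix i j assume "i < n" "j < n" "j < i"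
    then show "U i j = z" by (simp add: U_def)
  next
    fix i j assume ij: "i < n" "j < n"
    show "A i j = isum p z n (\<lambda>l. m (U i l) (U j l))"
    proof (cases "i \<le> j")
      case True
      then show ?thesis using low ij by blast
    next
      case False
      have "A i j = A j i" using Asym ij by blast
      also have "\<dots> = isum p z n (\<lambda>l. m (U j l) (U i l))" using low False ij by simp
      also have "(\<lambda>l. m (U j l) (U i l)) = (\<lambda>l. m (U i l) (U j l))" using m_comm by blast
      finally show ?thesis .
    qed
  qed
qed

end

theorem mainTheorem7:
  fixes p m :: "'a \<Rightarrow> 'a \<Rightarrow> 'a" and z e :: 'a
    and n :: nat and A :: "nat \<Rightarrow> nat \<Rightarrow> 'a"
  assumes "normal_incline p m z e"
    and "n \<ge> 3"
    and "completely_positive p m z n A"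
    and "lap2_condition p m n A"
  shows "UL_completely_positive p m z n A"
  using ninc.main[OF ninc.intro[OF assms(1)] assms(3) assms(4)] .

end
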